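(* Let $\mu:\Theta\to[0,\omega/B_{\min}]$ be a pacing function and define $\ell^\mu(w,B):=\min\big\{s\in\arg\min_{t\in[0,\omega/B_{\min}]}q^\mu(w,B,t)\big\}$ for $(w,B)\in\Theta$. Then (1) $\ell^\mu$ is non-decreasing in each component of $w$ (for fixed $B$ and fixed other components), and (2) $\ell^\mu$ is non-increasing in $B$ (for fixed $w$).
   Context: Setting. Fix integers $n\ge 2$ and $d\ge 2$, and constants $U>0$, $B_{\min}>0$. Buyer types are $\theta=(w,B)\in\Theta:=(0,U)^d\times(B_{\min},U)$; $\Theta_w:=(0,U)^d$. Item types are $\alpha\in A\subset\mathbb{R}^d_{+}$ (strictly positive orthant); all sets carry the Lebesgue $\sigma$-algebra. $F$ is a probability distribution on $A$ with a density and $G$ a probability distribution on $\Theta$ with a density. Buyer $(w,B)$ values item $\alpha$ at $w^T\alpha$; $\omega>0$ is a constant with $w^T\alpha\le\omega$ for all $w\in\Theta_w,\alpha\in A$. Reserve prices: measurable $r:A\to(0,\infty)$. A pacing function is a measurable $\mu:\Theta\to\mathbb{R}_{\ge0}$. For $\alpha\in A$, $\lambda^\mu_\alpha$ is the distribution of $w^T\alpha/(1+\mu(w,B))$ when $(w,B)\sim G$, and $H^\mu_\alpha$ the distribution of the maximum of $n-1$ i.i.d. draws from $\lambda^\mu_\alpha$; $H^\mu_\alpha(x):=\lambda^\mu_\alpha((-\infty,x])^{n-1}$. The dual function is $q^\mu(w,B,t):=(1+t)\,\mathbb{E}_{\alpha\sim F}\Big[\mathbf 1\Big\{\frac{w^T\alpha}{1+t}\ge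 r(\alpha)\Big\}\int_{r(\alpha)}^{\frac{w^T\alpha}{1+t}}H^\mu_\alpha(s)\,ds\Big]+tB$, for $t\ge0$; it is continuous in $t$, so the minimum defining $\ell^\mu$ exists. *)

theory Defs
  imports "HOL-Probability.Probability"
begin

definition Theta_w :: "real \<Rightarrow> (real ^ 'd) set" where
  "Theta_w U = {w. \<forall>i. 0 < w $ i \<and> w $ i < U}"

definition Theta :: "real \<Rightarrow> real \<Rightarrow> ((real ^ 'd) \<times> real) set" where
  "Theta U Bmin = {(w, B). w \<in> Theta_w U \<and> Bmin < B \<and> B < U}"

definition lam_cdf ::
  "((real ^ 'd) \<times> real) measure \<Rightarrow> ((real ^ 'd) \<times> real \<Rightarrow> real) \<Rightarrow> real ^ 'd \<Rightarrow> real \<Rightarrow> real" where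
  "lam_cdf G mu \<alpha> x = measure G {\<theta> \<in> space G. (fst \<theta> \<bullet> \<alpha>) / (1 + mu \<theta>) \<le> x}"

definition Hfun ::
  "nat \<Rightarrow> ((real ^ 'd) \<times> real) measure \<Rightarrow> ((real ^ 'd) \<times> real \<Rightarrow> real) \<Rightarrow> real ^ 'd \<Rightarrow> real \<Rightarrow> real" where
  "Hfun n G mu \<alpha> x = (lam_cdf G mu \<alpha> x) ^ (n - 1)"

definition qfun ::
  "nat \<Rightarrow> (real ^ 'd) measure \<Rightarrow> ((real ^ 'd) \<times> real) measure \<Rightarrow> (real ^ 'd \<Rightarrow> real)
   \<Rightarrow> ((real ^ 'd) \<times> real \<Rightarrow> real) \<Rightarrow> real ^ 'd \<Rightarrow> real \<Rightarrow> real \<Rightarrow> real" where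
  "qfun n F G r mu w B t =
     (1 + t) * (\<integral>\<alpha>. (if (w \<bullet> \<alpha>) / (1 + t) \<ge> r \<alpha>
                       then (LBINT s = r \<alpha> .. (w \<bullet> \<alpha>) / (1 + t). Hfun n G mu \<alpha> s)
                       else 0) \<partial>F)
     + t * B"

definition ell ::
  "nat \<Rightarrow> (real ^ 'd) measure \<Rightarrow> ((real ^ 'd) \<times> real) measure \<Rightarrow> (real ^ 'd \<Rightarrow> real)
   \<Rightarrow> ((real ^ 'd) \<times> real \<Rightarrow> real) \<Rightarrow> real \<Rightarrow> real \<Rightarrow> real ^ 'd \<Rightarrow> real \<Rightarrow> real" where
  "ell n F G r mu \<omega> Bmin w B =
     (LEAST s. s \<in> {0 .. \<omega> / Bmin} \<and>
        (\<forall>t \<in> {0 .. \<omega> / Bmin}. qfun n F G r mu w B s \<le> qfun n F G r mu w B t))"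

end

theory Submission
  imports Defs
begin


lemma mono_integrable:
  fixes h :: "real \<Rightarrow> real"
  assumes m: "mono h" and b: "\<And>s. 0 \<le> h s \<and> h s \<le> 1" and ab: "a \<le> b"
  shows "interval_lebesgue_integrable lborel (ereal a) (ereal b) h"
proof -
  have hm: "h \<in> borel_measurable borel" by (rule borel_measurable_mono[OF m])
  have "set_integrable lborel (einterval a b) h"
    unfolding set_integrable_def
    by (rule integrableI_bounded_set_indicator[where B=1]) (use hm b ab in \<open>auto simp: einterval_iff einterval_eq\<close>)
  then show ?thesis using ab by (simp add: interval_lebesgue_integrable_def)
qed

lemma mono_int_bounds:
  fixes h :: "real \<Rightarrow> real"
  assumes m: "mono h" and b: "\<And>s. 0 \<le> h s \<and> h s \<le> 1" and ab: "a \<le> b"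
  shows "(b - a) * h a \<le> (LBINT s = a..b. h s)" "(LBINT s = a..b. h s) \<le> (b - a) * h b"
proof -
  have I: "set_integrable lborel (einterval a b) h"
    using mono_integrable[OF m b ab] ab by (simp add: interval_lebesgue_integrable_def)
  have C: "set_integrable lborel (einterval a b) (\<lambda>s. c)" for c :: real
    using interval_integral_const(1)[of a b c] ab by (simp add: interval_lebesgue_integrable_def)
  have "(LINT s:einterval a b|lborel. h a) \<le> (LINT s:einterval a b|lborel. h s)"
    by (rule set_integral_mono[OF C I]) (auto simp: einterval_iff intro: monoD[OF m])
  moreover have "(LINT s:einterval a b|lborel. h s) \<le> (LINT s:einterval a b|lborel. h b)"
    by (rule set_integral_mono[OF I C]) (auto simp: einterval_iff intro: monoD[OF m])
  moreover have "(LINT s:einterval a b|lborel. c) = c * (b - a)" for c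
    using interval_integral_const(2)[of a b c] ab interval_lebesgue_integral_le_eq[of "ereal a" "ereal b" lborel "\<lambda>s. c"] by simp
  ultimately show "(b - a) * h a \<le> (LBINT s = a..b. h s)" "(LBINT s = a..b. h s) \<le> (b - a) * h b"
    using ab by (simp_all add: interval_lebesgue_integral_le_eq mult.commute)
qed

definition Phi :: "(real \<Rightarrow> real) \<Rightarrow> real \<Rightarrow> real \<Rightarrow> real" where
  "Phi h r x = (if r \<le> x then (LBINT s = r..x. h s) else 0)"

lemma Phi_K:
  fixes h :: "real \<Rightarrow> real"
  assumes m: "mono h" and b: "\<And>s. 0 \<le> h s \<and> h s \<le> 1" and ab: "a \<le> b"
  shows "(b - a) * (if r \<le> a then h a else 0) \<le> Phi h r b - Phi h r a"
    and "Phi h r b - Phi h r a \<le> (b - a) * (if r \<le> b then h b else 0)"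
proof -
  have "(b - a) * (if r \<le> a then h a else 0) \<le> Phi h r b - Phi h r a \<and>
        Phi h r b - Phi h r a \<le> (b - a) * (if r \<le> b then h b else 0)"
  proof (cases "r \<le> a")
    case True
    have sum: "(LBINT s = r..a. h s) + (LBINT s = a..b. h s) = (LBINT s = r..b. h s)"
      by (rule interval_integral_sum) (use True ab in \<open>auto intro!: mono_integrable[OF m b] simp: min_def max_def\<close>)
    show ?thesis using True ab sum mono_int_bounds[OF m b ab] by (simp add: Phi_def)
  next
    case False
    show ?thesis
    proof (cases "r \<le> b")
      case True
      have "(b - r) * h r \<le> (LBINT s = r..b. h s)" "(LBINT s = r..b. h s) \<le> (b - r) * h b"
        using mono_int_bounds[OF m b True] by auto
      moreover have "0 \<le> (b - r) * h r" using True b[of r] by simp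
      moreover have "(b - r) * h b \<le> (b - a) * h b" using False b[of b] by (intro mult_right_mono) auto
      ultimately show ?thesis using False True by (simp add: Phi_def)
    qed (use False in \<open>simp add: Phi_def\<close>)
  qed
  then show "(b - a) * (if r \<le> a then h a else 0) \<le> Phi h r b - Phi h r a"
    and "Phi h r b - Phi h r a \<le> (b - a) * (if r \<le> b then h b else 0)" by auto
qed

lemma slope_right:
  fixes P k :: "real \<Rightarrow> real"
  assumes K: "\<And>a b. a \<le> b \<Longrightarrow> (b - a) * k a \<le> P b - P a \<and> P b - P a \<le> (b - a) * k b"
    and ab: "a < b" and bb: "b \<le> b'"
  shows "(P b - P a) / (b - a) \<le> (P b' - P a) / (b' - a)"
proof -
  have D: "P b - P a \<le> (b - a) * k b" using K[of a b] ab by auto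
  have E: "(b' - b) * k b \<le> P b' - P b" using K[of b b'] bb by auto
  have "(P b - P a) * (b' - b) \<le> (b - a) * k b * (b' - b)" using D bb by (intro mult_right_mono) auto
  also have "\<dots> = (b - a) * ((b' - b) * k b)" by simp
  also have "\<dots> \<le> (b - a) * (P b' - P b)" using E ab by (intro mult_left_mono) auto
  finally have "(P b - P a) * (b' - a) \<le> (P b' - P a) * (b - a)" by (simp add: algebra_simps)
  then show ?thesis using ab bb by (simp add: divide_simps)
qed

lemma slope_left:
  fixes P k :: "real \<Rightarrow> real"
  assumes K: "\<And>a b. a \<le> b \<Longrightarrow> (b - a) * k a \<le> P b - P a \<and> P b - P a \<le> (b - a) * k b"
    and aa: "a \<le> a'" and ab: "a' < b'"
  shows "(P b' - P a) / (b' - a) \<le> (P b' - P a') / (b' - a')"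
proof -
  have D: "P a' - P a \<le> (a' - a) * k a'" using K[of a a'] aa by auto
  have E: "(b' - a') * k a' \<le> P b' - P a'" using K[of a' b'] ab by auto
  have "(P a' - P a) * (b' - a') \<le> (a' - a) * k a' * (b' - a')" using D ab by (intro mult_right_mono) auto
  also have "\<dots> = (a' - a) * ((b' - a') * k a')" by simp
  also have "\<dots> \<le> (a' - a) * (P b' - P a')" using E aa by (intro mult_left_mono) auto
  finally have "(P b' - P a) * (b' - a') \<le> (P b' - P a') * (b' - a)" by (simp add: algebra_simps)
  then show ?thesis using aa ab by (simp add: divide_simps)
qed

lemma persp_dd:
  fixes P k :: "real \<Rightarrow> real"
  assumes K: "\<And>a b. a \<le> b \<Longrightarrow> (b - a) * k a \<le> P b - P a \<and> P b - P a \<le> (b - a) * k b"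
    and v: "0 \<le> v" "v \<le> v'" and c: "0 < c" "c \<le> c'"
  shows "c' * (P (v' / c') - P (v / c')) \<le> c * (P (v' / c) - P (v / c))"
proof (cases "v = v'")
  case False
  then have vv: "v < v'" using v by simp
  define x where "x = v / c'"
  define x' where "x' = v' / c'"
  define y where "y = v / c"
  define y' where "y' = v' / c"
  note xdefs = x_def x'_def y_def y'_def
  have c'pos: "0 < c'" using c by simp
  have xx: "x < x'" "y < y'" using vv c c'pos by (simp_all add: xdefs divide_strict_right_mono)
  have xy: "x \<le> y" "x' \<le> y'" using v c c'pos unfolding xdefs
    by (auto intro!: divide_left_mono mult_pos_pos)
  have "(P x' - P x) / (x' - x) \<le> (P y' - P x) / (y' - x)"
    by (rule slope_right[OF K xx(1) xy(2)])
  also have "\<dots> \<le> (P y' - P y) / (y' - y)"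
    by (rule slope_left[OF K xy(1) xx(2)])
  finally have S: "(P x' - P x) / (x' - x) \<le> (P y' - P y) / (y' - y)" .
  have L1: "c' * (x' - x) = v' - v" using c'pos by (simp add: xdefs field_simps)
  have L2: "c * (y' - y) = v' - v" using c by (simp add: xdefs field_simps)
  have "c' * (P x' - P x) = (v' - v) * ((P x' - P x) / (x' - x))"
    unfolding L1[symmetric] using xx by (simp add: field_simps)
  also have "\<dots> \<le> (v' - v) * ((P y' - P y) / (y' - y))"
    using S vv by (intro mult_left_mono) auto
  also have "\<dots> = c * (P y' - P y)" unfolding L2[symmetric] using xx by (simp add: field_simps)
  finally show ?thesis by (simp add: xdefs)
qed simp



lemma borel_to_lebesgue_on:
  "f \<in> borel_measurable borel \<Longrightarrow> f \<in> borel_measurable (lebesgue_on S)"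
  by (intro measurable_restrict_space1 measurable_completion) (simp add: measurable_cong_sets[OF sets_lborel refl])

lemma H_props:
  fixes G :: "((real ^ 'd) \<times> real) measure" and mu :: "(real ^ 'd) \<times> real \<Rightarrow> real"
  assumes G: "prob_space G" "sets G = sets (lebesgue_on Th)"
    and mu: "mu \<in> borel_measurable (lebesgue_on Th)"
  shows "mono (Hfun n G mu \<alpha>)" "\<And>s. 0 \<le> Hfun n G mu \<alpha> s \<and> Hfun n G mu \<alpha> s \<le> 1"
proof -
  interpret prob_space G by (rule G(1))
  have [measurable]: "mu \<in> borel_measurable G" by (subst measurable_cong_sets[OF G(2) refl]) (rule mu)
  have fb: "(\<lambda>\<theta>::(real ^ 'd) \<times> real. fst \<theta> \<bullet> \<alpha>) \<in> borel_measurable borel"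
    by (intro borel_measurable_continuous_onI continuous_intros)
  have [measurable]: "(\<lambda>\<theta>::(real ^ 'd) \<times> real. fst \<theta> \<bullet> \<alpha>) \<in> borel_measurable G"
    by (subst measurable_cong_sets[OF G(2) refl]) (rule borel_to_lebesgue_on[OF fb])
  have S: "{\<theta> \<in> space G. (fst \<theta> \<bullet> \<alpha>) / (1 + mu \<theta>) \<le> x} \<in> sets G" for x
    by measurable
  have "lam_cdf G mu \<alpha> x \<le> lam_cdf G mu \<alpha> y" if "x \<le> y" for x y
    unfolding lam_cdf_def using that by (intro finite_measure_mono S) auto
  then show "mono (Hfun n G mu \<alpha>)"
    unfolding Hfun_def by (intro monoI power_mono) (auto simp: lam_cdf_def)
  show "0 \<le> Hfun n G mu \<alpha> s \<and> Hfun n G mu \<alpha> s \<le> 1" for s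
    unfolding Hfun_def lam_cdf_def by (auto intro: power_le_one)
qed

lemma H_joint:
  fixes G :: "((real ^ 'd) \<times> real) measure" and mu :: "(real ^ 'd) \<times> real \<Rightarrow> real"
  assumes G: "prob_space G" "sets G = sets (lebesgue_on Th)"
    and mu: "mu \<in> borel_measurable (lebesgue_on Th)"
  shows "(\<lambda>(\<alpha>, s). Hfun n G mu \<alpha> s) \<in> borel_measurable (lebesgue_on A \<Otimes>\<^sub>M lborel)"
proof -
  interpret prob_space G by (rule G(1))
  let ?N = "lebesgue_on A \<Otimes>\<^sub>M lborel"
  have [measurable]: "mu \<in> borel_measurable G" by (subst measurable_cong_sets[OF G(2) refl]) (rule mu)
  have fb: "(\<lambda>\<theta>::(real ^ 'd) \<times> real. fst \<theta>) \<in> borel_measurable borel"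
    by (intro borel_measurable_continuous_onI continuous_intros)
  have [measurable]: "(\<lambda>\<theta>::(real ^ 'd) \<times> real. fst \<theta>) \<in> borel_measurable G"
    by (subst measurable_cong_sets[OF G(2) refl]) (rule borel_to_lebesgue_on[OF fb])
  have [measurable]: "(\<lambda>x::real^'d. x) \<in> borel_measurable (lebesgue_on A)"
    by (rule borel_to_lebesgue_on) simp
  have "{x \<in> space (?N \<Otimes>\<^sub>M G). snd x \<in> {\<theta> \<in> space G. (fst \<theta> \<bullet> fst (fst x)) / (1 + mu \<theta>) \<le> snd (fst x)}} \<in> sets (?N \<Otimes>\<^sub>M G)"
    by measurable
  then have "(\<lambda>p. emeasure G {\<theta> \<in> space G. (fst \<theta> \<bullet> fst p) / (1 + mu \<theta>) \<le> snd p}) \<in> borel_measurable ?N"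
    by (intro measurable_emeasure) auto
  then have "(\<lambda>p. (enn2real (emeasure G {\<theta> \<in> space G. (fst \<theta> \<bullet> fst p) / (1 + mu \<theta>) \<le> snd p})) ^ (n - 1)) \<in> borel_measurable ?N"
    by measurable
  then show ?thesis
    by (simp add: Hfun_def lam_cdf_def measure_def case_prod_beta')
qed

lemma integrand_meas:
  fixes G :: "((real ^ 'd) \<times> real) measure" and mu :: "(real ^ 'd) \<times> real \<Rightarrow> real"
  assumes G: "prob_space G" "sets G = sets (lebesgue_on Th)"
    and mu: "mu \<in> borel_measurable (lebesgue_on Th)"
    and r: "r \<in> borel_measurable (lebesgue_on A)"
  shows "(\<lambda>\<alpha>. if (w \<bullet> \<alpha>) / (1 + t) \<ge> r \<alpha>
                       then (LBINT s = r \<alpha> .. (w \<bullet> \<alpha>) / (1 + t). Hfun n G mu \<alpha> s)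
                       else 0) \<in> borel_measurable (lebesgue_on A)"
proof -
  let ?N = "lebesgue_on A \<Otimes>\<^sub>M lborel"
  have HJ[measurable]: "(\<lambda>(\<alpha>, s). Hfun n G mu \<alpha> s) \<in> borel_measurable ?N"
    by (rule H_joint[OF G mu])
  have xb: "(\<lambda>\<alpha>::real^'d. (w \<bullet> \<alpha>) / (1 + t)) \<in> borel_measurable borel"
    by measurable
  have [measurable]: "(\<lambda>\<alpha>::real^'d. (w \<bullet> \<alpha>) / (1 + t)) \<in> borel_measurable (lebesgue_on A)"
    by (rule borel_to_lebesgue_on[OF xb])
  have [measurable]: "r \<in> borel_measurable (lebesgue_on A)" by (rule r)
  have [measurable]: "(\<lambda>p. Hfun n G mu (fst p) (snd p)) \<in> borel_measurable ?N"
    using HJ by (simp add: case_prod_beta')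
  then have [measurable]: "(\<lambda>p. Hfun n G mu (fst p) (snd p)) \<in> borel_measurable (lebesgue_on A \<Otimes>\<^sub>M borel)"
    by (subst measurable_cong_sets[OF sets_pair_measure_cong[OF refl sets_lborel[symmetric]] refl])
  have "(\<lambda>(\<alpha>, s). indicator (einterval (r \<alpha>) ((w \<bullet> \<alpha>) / (1 + t))) s *\<^sub>R Hfun n G mu \<alpha> s)
     \<in> borel_measurable ?N"
    unfolding case_prod_beta' einterval_eq indicator_def greaterThanLessThan_iff mem_Collect_eq by measurable
  then have M: "(\<lambda>\<alpha>. \<integral>s. indicator (einterval (r \<alpha>) ((w \<bullet> \<alpha>) / (1 + t))) s *\<^sub>R Hfun n G mu \<alpha> s \<partial>lborel)
     \<in> borel_measurable (lebesgue_on A)"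
    by (rule lborel.borel_measurable_lebesgue_integral)
  have "(\<lambda>\<alpha>. if (w \<bullet> \<alpha>) / (1 + t) \<ge> r \<alpha>
          then \<integral>s. indicator (einterval (r \<alpha>) ((w \<bullet> \<alpha>) / (1 + t))) s *\<^sub>R Hfun n G mu \<alpha> s \<partial>lborel
          else 0) \<in> borel_measurable (lebesgue_on A)"
    using M by measurable
  then show ?thesis
    by (simp add: interval_lebesgue_integral_le_eq set_lebesgue_integral_def cong: if_cong)
qed



lemma least_min:
  fixes Q :: "real \<Rightarrow> real"
  assumes c: "continuous_on {0..T} Q" and T: "0 \<le> T"
  defines "L \<equiv> (LEAST s. s \<in> {0..T} \<and> (\<forall>t \<in> {0..T}. Q s \<le> Q t))"
  shows "L \<in> {0..T}" "\<forall>t \<in> {0..T}. Q L \<le> Q t"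
    "\<And>s. s \<in> {0..T} \<Longrightarrow> (\<forall>t \<in> {0..T}. Q s \<le> Q t) \<Longrightarrow> L \<le> s"
proof -
  obtain x0 where x0: "x0 \<in> {0..T}" "\<forall>y\<in>{0..T}. Q x0 \<le> Q y"
    using continuous_attains_inf[OF compact_Icc _ c] T by auto
  define S where "S = {s \<in> {0..T}. \<forall>t \<in> {0..T}. Q s \<le> Q t}"
  have S_eq: "S = {0..T} \<inter> Q -` {..Q x0}"
    using x0 unfolding S_def by (auto intro: order_trans)
  have cl: "closed S" unfolding S_eq by (rule continuous_closed_preimage[OF c]) auto
  have ne: "S \<noteq> {}" using x0 S_def by auto
  have bb: "bdd_below S" unfolding S_def by (auto intro!: bdd_belowI[where m=0])
  have IS: "Inf S \<in> S" by (rule closed_contains_Inf[OF ne bb cl])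
  have "L = Inf S"
    unfolding L_def
    by (rule Least_equality) (use IS bb in \<open>auto simp: S_def intro: cInf_lower\<close>)
  then show "L \<in> {0..T}" "\<forall>t \<in> {0..T}. Q L \<le> Q t"
    "\<And>s. s \<in> {0..T} \<Longrightarrow> (\<forall>t \<in> {0..T}. Q s \<le> Q t) \<Longrightarrow> L \<le> s"
    using IS bb by (auto simp: S_def intro: cInf_lower)
qed



theorem lemma3:
  fixes n :: nat and U Bmin \<omega> :: real
    and A :: "(real ^ 'd) set"
    and F :: "(real ^ 'd) measure" and f :: "real ^ 'd \<Rightarrow> ennreal"
    and G :: "((real ^ 'd) \<times> real) measure" and g :: "(real ^ 'd) \<times> real \<Rightarrow> ennreal"
    and r :: "real ^ 'd \<Rightarrow> real"
    and mu :: "(real ^ 'd) \<times> real \<Rightarrow> real"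
  assumes n2: "n \<ge> 2"
    and d2: "CARD('d) \<ge> 2"
    and U_pos: "U > 0" and Bmin_pos: "Bmin > 0"
    and A_meas: "A \<in> sets lebesgue"
    and A_pos: "A \<subseteq> {\<alpha>. \<forall>i. 0 < \<alpha> $ i}"
    and F_dens: "F = density (lebesgue_on A) f" and f_meas: "f \<in> borel_measurable (lebesgue_on A)"
    and F_prob: "prob_space F"
    and G_dens: "G = density (lebesgue_on (Theta U Bmin)) g"
    and g_meas: "g \<in> borel_measurable (lebesgue_on (Theta U Bmin))"
    and G_prob: "prob_space G"
    and omega_pos: "\<omega> > 0"
    and omega_bound: "\<forall>w \<in> Theta_w U. \<forall>\<alpha> \<in> A. w \<bullet> \<alpha> \<le> \<omega>"
    and r_meas: "r \<in> borel_measurable (lebesgue_on A)"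
    and r_pos: "\<forall>\<alpha> \<in> A. r \<alpha> > 0"
    and mu_meas: "mu \<in> borel_measurable (lebesgue_on (Theta U Bmin))"
    and mu_range: "\<forall>\<theta> \<in> Theta U Bmin. mu \<theta> \<in> {0 .. \<omega> / Bmin}"
  shows
    "(\<forall>w w' B i. (w, B) \<in> Theta U Bmin \<and> (w', B) \<in> Theta U Bmin \<and>
        (\<forall>j. j \<noteq> i \<longrightarrow> w' $ j = w $ j) \<and> w $ i \<le> w' $ i \<longrightarrow>
        ell n F G r mu \<omega> Bmin w B \<le> ell n F G r mu \<omega> Bmin w' B)
     \<and> (\<forall>w B B'. (w, B) \<in> Theta U Bmin \<and> (w, B') \<in> Theta U Bmin \<and> B \<le> B' \<longrightarrow>
        ell n F G r mu \<omega> Bmin w B' \<le> ell n F G r mu \<omega> Bmin w B)"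
proof -
  let ?Th = "Theta U Bmin"
  define T where "T = \<omega> / Bmin"
  have T0: "0 \<le> T" using omega_pos Bmin_pos by (simp add: T_def)
  have GS: "sets G = sets (lebesgue_on ?Th)" using G_dens by simp
  have FS: "sets F = sets (lebesgue_on A)" using F_dens by simp
  have spF: "space F = A" using F_dens by (simp add: space_restrict_space)
  interpret F: prob_space F by (rule F_prob)
  have Hm: "\<And>\<alpha>. mono (Hfun n G mu \<alpha>)" and Hb: "\<And>\<alpha> s. 0 \<le> Hfun n G mu \<alpha> s \<and> Hfun n G mu \<alpha> s \<le> 1"
    using H_props[OF G_prob GS mu_meas] by auto
  define P where "P \<alpha> x = Phi (Hfun n G mu \<alpha>) (r \<alpha>) x" for \<alpha> x
  define k where "k \<alpha> x = (if r \<alpha> \<le> x then Hfun n G mu \<alpha> x else 0)" for \<alpha> x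
  have K: "\<And>a b. a \<le> b \<Longrightarrow> (b - a) * k \<alpha> a \<le> P \<alpha> b - P \<alpha> a \<and> P \<alpha> b - P \<alpha> a \<le> (b - a) * k \<alpha> b" for \<alpha>
    unfolding P_def k_def using Phi_K[OF Hm Hb] by blast
  have k01: "0 \<le> k \<alpha> x \<and> k \<alpha> x \<le> 1" for \<alpha> x using Hb by (simp add: k_def)
  have q_eq: "qfun n F G r mu w B t = (1 + t) * (\<integral>\<alpha>. P \<alpha> ((w \<bullet> \<alpha>) / (1 + t)) \<partial>F) + t * B" for w B t
    by (simp add: qfun_def P_def Phi_def)
  have meas: "(\<lambda>\<alpha>. P \<alpha> ((w \<bullet> \<alpha>) / (1 + t))) \<in> borel_measurable F" for w t
  proof -
    have "(\<lambda>\<alpha>. P \<alpha> ((w \<bullet> \<alpha>) / (1 + t))) \<in> borel_measurable (lebesgue_on A)"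
      using integrand_meas[OF G_prob GS mu_meas r_meas, of w t n] by (simp add: P_def Phi_def)
    then show ?thesis by (subst measurable_cong_sets[OF FS refl])
  qed
  have inner_nn: "0 \<le> w \<bullet> \<alpha>" if "w \<in> Theta_w U" "\<alpha> \<in> A" for w \<alpha>
  proof -
    have "\<forall>i. 0 \<le> w $ i * \<alpha> $ i" using that A_pos unfolding Theta_w_def
      by (auto intro!: mult_nonneg_nonneg less_imp_le)
    then show ?thesis unfolding inner_vec_def by (simp add: sum_nonneg)
  qed
  have P0: "P \<alpha> 0 = 0" if "\<alpha> \<in> A" for \<alpha>
  proof -
    have "0 < r \<alpha>" using r_pos that by auto
    then show ?thesis by (simp add: P_def Phi_def)
  qed
  have Plip: "\<bar>P \<alpha> b - P \<alpha> a\<bar> \<le> \<bar>b - a\<bar>" for \<alpha> a b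
  proof (cases "a \<le> b")
    case True
    have "0 \<le> (b - a) * k \<alpha> a" "(b - a) * k \<alpha> b \<le> b - a"
      using True k01[of \<alpha> a] k01[of \<alpha> b] by (auto simp: mult_left_le)
    then show ?thesis using K[OF True, of \<alpha>] True by auto
  next
    case False
    then have ba: "b \<le> a" by simp
    have "0 \<le> (a - b) * k \<alpha> b" "(a - b) * k \<alpha> a \<le> a - b"
      using ba k01[of \<alpha> a] k01[of \<alpha> b] by (auto simp: mult_left_le)
    then show ?thesis using K[OF ba, of \<alpha>] ba by auto
  qed
  have bnd: "0 \<le> P \<alpha> ((w \<bullet> \<alpha>) / (1 + t)) \<and> P \<alpha> ((w \<bullet> \<alpha>) / (1 + t)) \<le> \<omega>"
    if w: "w \<in> Theta_w U" and a: "\<alpha> \<in> A" and t: "0 \<le> t" for w \<alpha> t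
  proof -
    let ?x = "(w \<bullet> \<alpha>) / (1 + t)"
    have v0: "0 \<le> w \<bullet> \<alpha>" by (rule inner_nn[OF w a])
    have x0: "0 \<le> ?x" using v0 t by simp
    have xv: "?x \<le> w \<bullet> \<alpha>" using v0 t by (simp add: divide_le_eq mult_le_cancel_left1 mult_left_mono) 
    have "?x * k \<alpha> 0 \<le> P \<alpha> ?x" "P \<alpha> ?x \<le> ?x * k \<alpha> ?x"
      using K[OF x0, of \<alpha>] P0[OF a] by auto
    moreover have "0 \<le> ?x * k \<alpha> 0"
      by (rule mult_nonneg_nonneg[OF x0]) (use k01[of \<alpha> 0] in auto)
    moreover have "?x * k \<alpha> ?x \<le> ?x"
      by (rule mult_left_le) (use x0 k01[of \<alpha> ?x] in auto)
    moreover have "w \<bullet> \<alpha> \<le> \<omega>" using omega_bound w a by auto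
    ultimately show ?thesis using xv by linarith
  qed
  have integ: "integrable F (\<lambda>\<alpha>. P \<alpha> ((w \<bullet> \<alpha>) / (1 + t)))" if w: "w \<in> Theta_w U" and t: "0 \<le> t" for w t
    by (rule F.integrable_const_bound[where B=\<omega>]) (use bnd[OF w _ t] spF meas in \<open>auto intro!: AE_I2\<close>)
  define J where "J w t = (\<integral>\<alpha>. P \<alpha> ((w \<bullet> \<alpha>) / (1 + t)) \<partial>F)" for w t
  have Jlip: "\<bar>J w t - J w t'\<bar> \<le> \<omega> * \<bar>t - t'\<bar>" if w: "w \<in> Theta_w U" and t: "0 \<le> t" "0 \<le> t'" for w t t'
  proof -
    have pt: "\<bar>P \<alpha> ((w \<bullet> \<alpha>) / (1 + t)) - P \<alpha> ((w \<bullet> \<alpha>) / (1 + t'))\<bar> \<le> \<omega> * \<bar>t - t'\<bar>" if a: "\<alpha> \<in> A" for \<alpha>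
    proof -
      let ?v = "w \<bullet> \<alpha>"
      have v0: "0 \<le> ?v" by (rule inner_nn[OF w a])
      have vw: "?v \<le> \<omega>" using omega_bound w a by auto
      have eq: "?v / (1 + t) - ?v / (1 + t') = ?v * (t' - t) / ((1 + t) * (1 + t'))"
        using t by (simp add: field_simps)
      have "\<bar>?v * (t' - t) / ((1 + t) * (1 + t'))\<bar> = ?v * \<bar>t' - t\<bar> / ((1 + t) * (1 + t'))"
        using t v0 by (simp add: abs_mult)
      also have "\<dots> \<le> ?v * \<bar>t' - t\<bar> / 1"
        using t v0 by (intro divide_left_mono) (auto simp: mult_pos_pos add_pos_nonneg intro: order_trans[of 1 "1 + t" ])
      also have "\<dots> \<le> \<omega> * \<bar>t - t'\<bar>" using vw by (simp add: abs_minus_commute mult_right_mono)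
      finally have "\<bar>?v / (1 + t) - ?v / (1 + t')\<bar> \<le> \<omega> * \<bar>t - t'\<bar>" unfolding eq .
      then show ?thesis using Plip[of \<alpha> "?v / (1 + t)" "?v / (1 + t')"] by linarith
    qed
    let ?f = "\<lambda>\<alpha>. P \<alpha> ((w \<bullet> \<alpha>) / (1 + t)) - P \<alpha> ((w \<bullet> \<alpha>) / (1 + t'))"
    have d: "J w t - J w t' = (\<integral>\<alpha>. ?f \<alpha> \<partial>F)"
      by (simp add: J_def Bochner_Integration.integral_diff[OF integ[OF w t(1)] integ[OF w t(2)]])
    have If: "integrable F ?f" using integ[OF w t(1)] integ[OF w t(2)] by auto
    have "(\<integral>\<alpha>. ?f \<alpha> \<partial>F) \<le> (\<integral>\<alpha>. \<omega> * \<bar>t - t'\<bar> \<partial>F)"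
      by (rule integral_mono[OF If]) (use pt spF in \<open>auto dest: abs_le_D1\<close>)
    moreover have "(\<integral>\<alpha>. - ?f \<alpha> \<partial>F) \<le> (\<integral>\<alpha>. \<omega> * \<bar>t - t'\<bar> \<partial>F)"
    proof (rule integral_mono)
      show "integrable F (\<lambda>\<alpha>. - ?f \<alpha>)"
        using Bochner_Integration.integrable_diff[OF integ[OF w t(2)] integ[OF w t(1)]] by simp
      fix \<alpha> assume "\<alpha> \<in> space F"
      then have "\<bar>?f \<alpha>\<bar> \<le> \<omega> * \<bar>t - t'\<bar>" using pt spF by simp
      then show "- ?f \<alpha> \<le> \<omega> * \<bar>t - t'\<bar>" by (simp only: abs_le_iff)
    qed simp
    moreover have m: "(\<integral>\<alpha>. - ?f \<alpha> \<partial>F) = - (\<integral>\<alpha>. ?f \<alpha> \<partial>F)"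
      by (rule Bochner_Integration.integral_minus)
    moreover have c: "(\<integral>\<alpha>. \<omega> * \<bar>t - t'\<bar> \<partial>F) = \<omega> * \<bar>t - t'\<bar>" by (simp add: F.prob_space)
    ultimately show ?thesis unfolding d abs_le_iff by linarith
  qed
  have Jcont: "continuous_on {0..T} (J w)" if w: "w \<in> Theta_w U" for w
  proof (rule lipschitz_on_continuous_on)
    show "\<omega>-lipschitz_on {0..T} (J w)"
      by (rule lipschitz_onI) (use Jlip[OF w] omega_pos in \<open>auto simp: dist_real_def\<close>)
  qed
  have qJ: "qfun n F G r mu w B t = (1 + t) * J w t + t * B" for w B t
    by (simp add: q_eq J_def)
  have qcont: "continuous_on {0..T} (qfun n F G r mu w B)" if w: "w \<in> Theta_w U" for w B
    unfolding qJ[abs_def] by (intro continuous_intros Jcont[OF w])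
  have ellP: "ell n F G r mu \<omega> Bmin w B \<in> {0..T}"
     "\<forall>t \<in> {0..T}. qfun n F G r mu w B (ell n F G r mu \<omega> Bmin w B) \<le> qfun n F G r mu w B t"
     "\<And>s. s \<in> {0..T} \<Longrightarrow> (\<forall>t \<in> {0..T}. qfun n F G r mu w B s \<le> qfun n F G r mu w B t) \<Longrightarrow>
        ell n F G r mu \<omega> Bmin w B \<le> s"
    if w: "w \<in> Theta_w U" for w B
    using least_min[OF qcont[OF w, of B] T0] unfolding ell_def T_def[symmetric] by auto
  let ?q = "qfun n F G r mu"
  let ?l = "ell n F G r mu \<omega> Bmin"
  show ?thesis
  proof (intro conjI allI impI)
    fix w w' :: "real ^ 'd" and B :: real and i :: 'd
    assume H: "(w, B) \<in> ?Th \<and> (w', B) \<in> ?Th \<and> (\<forall>j. j \<noteq> i \<longrightarrow> w' $ j = w $ j) \<and> w $ i \<le> w' $ i"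
    then have w: "w \<in> Theta_w U" and w': "w' \<in> Theta_w U" by (auto simp: Theta_def)
    have vle: "w \<bullet> \<alpha> \<le> w' \<bullet> \<alpha>" if a: "\<alpha> \<in> A" for \<alpha>
    proof -
      have "w $ j * \<alpha> $ j \<le> w' $ j * \<alpha> $ j" for j
      proof (cases "j = i")
        case True
        have "0 < \<alpha> $ j" using A_pos a by auto
        then show ?thesis using H True by (intro mult_right_mono) auto
      qed (use H in auto)
      then show ?thesis unfolding inner_vec_def by (intro sum_mono) auto
    qed
    define D where "D t = ?q w' B t - ?q w B t" for t
    have Deq: "D t = (\<integral>\<alpha>. (1 + t) * (P \<alpha> ((w' \<bullet> \<alpha>) / (1 + t)) - P \<alpha> ((w \<bullet> \<alpha>) / (1 + t))) \<partial>F)"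
      if t: "0 \<le> t" for t
    proof -
      have "(\<integral>\<alpha>. (1 + t) * (P \<alpha> ((w' \<bullet> \<alpha>) / (1 + t)) - P \<alpha> ((w \<bullet> \<alpha>) / (1 + t))) \<partial>F)
          = (1 + t) * (\<integral>\<alpha>. (P \<alpha> ((w' \<bullet> \<alpha>) / (1 + t)) - P \<alpha> ((w \<bullet> \<alpha>) / (1 + t))) \<partial>F)"
        by (rule integral_mult_right_zero)
      also have "\<dots> = (1 + t) * (J w' t - J w t)"
        unfolding J_def by (simp only: Bochner_Integration.integral_diff[OF integ[OF w' t] integ[OF w t]])
      finally show ?thesis by (simp add: D_def qJ algebra_simps)
    qed
    have Dmono: "D t' \<le> D t" if t: "0 \<le> t" "t \<le> t'" for t t'
    proof -
      have t': "0 \<le> t'" using t by simp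
      have "(\<integral>\<alpha>. (1 + t') * (P \<alpha> ((w' \<bullet> \<alpha>) / (1 + t')) - P \<alpha> ((w \<bullet> \<alpha>) / (1 + t'))) \<partial>F)
         \<le> (\<integral>\<alpha>. (1 + t) * (P \<alpha> ((w' \<bullet> \<alpha>) / (1 + t)) - P \<alpha> ((w \<bullet> \<alpha>) / (1 + t))) \<partial>F)"
      proof (rule integral_mono)
        show "integrable F (\<lambda>\<alpha>. (1 + t') * (P \<alpha> ((w' \<bullet> \<alpha>) / (1 + t')) - P \<alpha> ((w \<bullet> \<alpha>) / (1 + t'))))"
          using integ[OF w' t'] integ[OF w t'] by auto
        show "integrable F (\<lambda>\<alpha>. (1 + t) * (P \<alpha> ((w' \<bullet> \<alpha>) / (1 + t)) - P \<alpha> ((w \<bullet> \<alpha>) / (1 + t))))"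
          using integ[OF w' t(1)] integ[OF w t(1)] by auto
        fix \<alpha> assume "\<alpha> \<in> space F"
        then have a: "\<alpha> \<in> A" using spF by simp
        show "(1 + t') * (P \<alpha> ((w' \<bullet> \<alpha>) / (1 + t')) - P \<alpha> ((w \<bullet> \<alpha>) / (1 + t')))
           \<le> (1 + t) * (P \<alpha> ((w' \<bullet> \<alpha>) / (1 + t)) - P \<alpha> ((w \<bullet> \<alpha>) / (1 + t)))"
          by (rule persp_dd[OF K inner_nn[OF w a] vle[OF a]]) (use t in auto)
      qed
      then show ?thesis using Deq t t' by simp
    qed
    show "?l w B \<le> ?l w' B"
    proof (rule ccontr)
      assume "\<not> ?l w B \<le> ?l w' B"
      then have lt: "?l w' B < ?l w B" by simp
      have s: "?l w B \<in> {0..T}" and s': "?l w' B \<in> {0..T}" using ellP(1)[OF w] ellP(1)[OF w'] by auto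
      have "D (?l w B) \<le> D (?l w' B)" using Dmono[of "?l w' B" "?l w B"] s' lt by auto
      moreover have "?q w' B (?l w' B) \<le> ?q w' B (?l w B)" using ellP(2)[OF w'] s by auto
      ultimately have "?q w B (?l w' B) \<le> ?q w B (?l w B)" unfolding D_def by linarith
      then have "\<forall>t\<in>{0..T}. ?q w B (?l w' B) \<le> ?q w B t" using ellP(2)[OF w, of B] by (auto intro: order_trans)
      then have "?l w B \<le> ?l w' B" using ellP(3)[OF w s'] by auto
      then show False using lt by simp
    qed
  next
    fix w :: "real ^ 'd" and B B' :: real
    assume H: "(w, B) \<in> ?Th \<and> (w, B') \<in> ?Th \<and> B \<le> B'"
    then have w: "w \<in> Theta_w U" by (auto simp: Theta_def)
    show "?l w B' \<le> ?l w B"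
    proof (cases "B = B'")
      case False
      then have BB: "B < B'" using H by simp
      have s: "?l w B \<in> {0..T}" and s': "?l w B' \<in> {0..T}" using ellP(1)[OF w] by auto
      have sh: "?q w B' t = ?q w B t + t * (B' - B)" for t by (simp add: qJ algebra_simps)
      have 1: "?q w B (?l w B) \<le> ?q w B (?l w B')" using ellP(2)[OF w] s' by auto
      have 2: "?q w B' (?l w B') \<le> ?q w B' (?l w B)" using ellP(2)[OF w] s by auto
      have "?l w B' * (B' - B) \<le> ?l w B * (B' - B)" using 1 2 unfolding sh by linarith
      then show ?thesis using BB by simp
    qed simp
  qed
qed

end
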